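(* For every $k\ge1$, $$B_k'=\{[f,l]\mid f\in B_k,\ l\in G_k\}=\{[l,f]\mid f\in B_k,\ l\in G_k\}.$$
   Context: Let $C_2=\{e,\sigma\}$ with $\sigma=(1,2)$. Define $B_1=C_2$ and $B_k=B_{k-1}\wr C_2$ for $k>1$, with elements written as wreath recursions $(g_1,g_2)\pi$, $g_1,g_2\in B_{k-1}$, $\pi\in C_2$, and multiplication $(g_1,g_2)\pi\cdot(h_1,h_2)\rho=(g_1h_{\pi(1)},g_2h_{\pi(2)})\pi\rho$. Define $G_1=\{e\}$ and, for $k>1$, $G_k=\{(g_1,g_2)\pi\in B_k : g_1g_2\in G_{k-1}\}$. The commutator is $[a,b]=aba^{-1}b^{-1}$. *)

theory Defs
  imports "HOL-Algebra.Generated_Groups"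
begin

text \<open>Elements of the iterated wreath products: E is the (unique) element of the
trivial group B_0, and W g1 g2 p is the wreath recursion (g1,g2)pi, where
p = True means pi = sigma = (1,2) and p = False means pi = e.\<close>

datatype wr = E | W wr wr bool

fun inB :: "nat \<Rightarrow> wr \<Rightarrow> bool" where
  "inB 0 x = (x = E)"
| "inB (Suc k) x = (case x of E \<Rightarrow> False | W a b p \<Rightarrow> inB k a \<and> inB k b)"

fun wmult :: "wr \<Rightarrow> wr \<Rightarrow> wr" where
  "wmult (W g1 g2 p) (W h1 h2 q) =
     W (wmult g1 (if p then h2 else h1)) (wmult g2 (if p then h1 else h2)) (p \<noteq> q)"
| "wmult _ _ = E"

fun wone :: "nat \<Rightarrow> wr" where
  "wone 0 = E"
| "wone (Suc k) = W (wone k) (wone k) False"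

definition Bgrp :: "nat \<Rightarrow> wr monoid" where
  "Bgrp k = \<lparr> carrier = {x. inB k x}, mult = wmult, one = wone k \<rparr>"

fun Gset :: "nat \<Rightarrow> wr set" where
  "Gset 0 = {E}"
| "Gset (Suc 0) = {wone 1}"
| "Gset (Suc (Suc k)) = {x. inB (Suc (Suc k)) x \<and>
      (case x of E \<Rightarrow> False | W g1 g2 p \<Rightarrow> wmult g1 g2 \<in> Gset (Suc k))}"

end

theory Submission
  imports Defs
begin

fun winv :: "wr \<Rightarrow> wr" where
  "winv E = E"
| "winv (W a b p) = (if p then W (winv b) (winv a) True else W (winv a) (winv b) False)"

fun sv :: "wr \<Rightarrow> nat \<Rightarrow> bool" where
  "sv E i = False"
| "sv (W a b p) 0 = p"
| "sv (W a b p) (Suc i) = (sv a i \<noteq> sv b i)"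

lemma inB_mult: "inB k x \<Longrightarrow> inB k y \<Longrightarrow> inB k (wmult x y)"
  by (induction k arbitrary: x y) (auto split: wr.splits)

lemma inB_one: "inB k (wone k)"
  by (induction k) auto

lemma inB_inv: "inB k x \<Longrightarrow> inB k (winv x)"
  by (induction k arbitrary: x) (auto split: wr.splits)

lemma assoc: "inB k x \<Longrightarrow> inB k y \<Longrightarrow> inB k z \<Longrightarrow>
   wmult (wmult x y) z = wmult x (wmult y z)"
  by (induction k arbitrary: x y z) (auto split: wr.splits)

lemma lone: "inB k x \<Longrightarrow> wmult (wone k) x = x"
  by (induction k arbitrary: x) (auto split: wr.splits)

lemma rone: "inB k x \<Longrightarrow> wmult x (wone k) = x"
  by (induction k arbitrary: x) (auto split: wr.splits)

lemma linv: "inB k x \<Longrightarrow> wmult (winv x) x = wone k"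
  by (induction k arbitrary: x) (auto split: wr.splits)

lemma sv_mult: "inB k x \<Longrightarrow> inB k y \<Longrightarrow> sv (wmult x y) i = (sv x i \<noteq> sv y i)"
proof (induction k arbitrary: x y i)
  case 0 then show ?case by auto
next
  case (Suc k)
  then obtain a b p c d q where x: "x = W a b p" and y: "y = W c d q"
    and "inB k a" "inB k b" "inB k c" "inB k d" by (auto split: wr.splits)
  then show ?case using Suc.IH by (cases i) auto
qed

lemma sv_one: "\<not> sv (wone k) i"
  by (induction k arbitrary: i) (auto elim: sv.elims)

lemma sv_inv: "inB k x \<Longrightarrow> sv (winv x) i = sv x i"
  using sv_mult[OF inB_inv, of k x x i] linv[of k x] sv_one[of k i] by auto

lemma grp: "group (Bgrp k)"
  apply (rule groupI)
  apply (auto simp: Bgrp_def inB_mult inB_one assoc lone)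
  using inB_inv linv by blast

lemma inv_eq: "inB k x \<Longrightarrow> inv\<^bsub>Bgrp k\<^esub> x = winv x"
  using group.inv_equality[OF grp[of k], of "winv x" x] linv[of k x] inB_inv[of k x]
  by (auto simp: Bgrp_def)

lemma rinv: "inB k x \<Longrightarrow> wmult x (winv x) = wone k"
  using group.r_inv[OF grp[of k], of x] inv_eq[of k x] by (auto simp: Bgrp_def)

lemma canc1: "inB k x \<Longrightarrow> inB k y \<Longrightarrow> wmult x (wmult (winv x) y) = y"
  by (metis assoc inB_inv rinv lone)

lemma canc2: "inB k x \<Longrightarrow> inB k y \<Longrightarrow> wmult (winv x) (wmult x y) = y"
  by (metis assoc inB_inv linv lone)

lemma inv_one: "winv (wone k) = wone k"
  by (induction k) auto

lemma inv_inv: "inB k x \<Longrightarrow> winv (winv x) = x"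
  by (induction k arbitrary: x) (auto split: wr.splits)

lemma inv_mult: "inB k x \<Longrightarrow> inB k y \<Longrightarrow> winv (wmult x y) = wmult (winv y) (winv x)"
  using group.inv_mult_group[OF grp[of k], of x y] inv_eq[of k] inB_mult[of k x y]
  by (auto simp: Bgrp_def)

lemma Gset_inB: "x \<in> Gset k \<Longrightarrow> inB k x"
  by (induction k rule: Gset.induct) (auto simp: inB_one)

lemma Gset_step: "1 \<le> k \<Longrightarrow> Gset (Suc k) = {x. inB (Suc k) x \<and>
      (case x of E \<Rightarrow> False | W g1 g2 p \<Rightarrow> wmult g1 g2 \<in> Gset k)}"
  by (cases k) auto

lemma key: "1 \<le> k \<Longrightarrow> inB k x \<Longrightarrow> \<forall>i. \<not> sv x i \<Longrightarrow>
   \<exists>f l. inB k f \<and> l \<in> Gset k \<and> x = wmult (wmult (wmult f l) (winv f)) (winv l)"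
proof (induction k arbitrary: x)
  case 0 then show ?case by simp
next
  case (Suc k)
  show ?case
  proof (cases "k = 0")
    case True
    then obtain p where "x = W E E p" using Suc.prems by (auto split: wr.splits)
    moreover have "\<not> p" using Suc.prems(3)[rule_format, of 0] calculation by simp
    ultimately show ?thesis using True
      by (intro exI[of _ "wone 1"]) auto
  next
    case False
    then have k1: "1 \<le> k" by simp
    obtain a b p where x: "x = W a b p" and a: "inB k a" and b: "inB k b"
      using Suc.prems by (auto split: wr.splits)
    have np: "\<not> p" using Suc.prems(3)[rule_format, of 0] x by simp
    have "\<forall>i. \<not> sv (wmult a b) i"
      using Suc.prems(3) x sv_mult[OF a b] by (metis sv.simps(3))
    then obtain f1 l' where f1: "inB k f1" and l': "l' \<in> Gset k"
      and ab: "wmult a b = wmult (wmult (wmult f1 l') (winv f1)) (winv l')"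
      using Suc.IH[OF k1 inB_mult[OF a b]] by blast
    have lB: "inB k l'" using Gset_inB[OF l'] .
    define f2 where "f2 = wmult (winv a) f1"
    have f2: "inB k f2" unfolding f2_def using inB_mult inB_inv a f1 by blast
    have "l' \<in> Gset k" by fact
    have e1: "a = wmult (wmult (wmult f1 (wone k)) (winv f2)) (winv (wone k))"
      unfolding f2_def using a f1
      by (simp add: inv_one rone[of k] inv_mult[of k] inB_inv inv_inv[of k] assoc[of k] inB_mult rinv[of k] lone[of k] canc1[of k])
    have e2: "b = wmult (wmult (wmult f2 l') (winv f1)) (winv l')"
    proof -
      have "b = wmult (winv a) (wmult a b)"
        using a b by (simp add: assoc[of k, symmetric] inB_inv linv[of k] lone[of k])
      also have "\<dots> = wmult (wmult (wmult f2 l') (winv f1)) (winv l')"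
        unfolding ab f2_def using a f1 lB
        by (simp add: assoc[of k] inB_inv inB_mult)
      finally show ?thesis .
    qed
    show ?thesis
      apply (rule exI[of _ "W f1 f2 False"], rule exI[of _ "W (wone k) l' True"])
      using f1 f2 lB l' x np e1 e2 k1 by (simp add: Gset_step inB_one lone)
  qed
qed

lemma comm_inv: "inB k f \<Longrightarrow> inB k l \<Longrightarrow>
  winv (wmult (wmult (wmult f l) (winv f)) (winv l)) = wmult (wmult (wmult l f) (winv l)) (winv f)"
  by (simp add: inv_mult[of k] inB_mult inB_inv inv_inv[of k] assoc[of k])

theorem mainTheorem14:
  fixes k :: nat
  assumes "k \<ge> 1"
  shows "derived (Bgrp k) (carrier (Bgrp k)) =
           {f \<otimes>\<^bsub>Bgrp k\<^esub> l \<otimes>\<^bsub>Bgrp k\<^esub> inv\<^bsub>Bgrp k\<^esub> f \<otimes>\<^bsub>Bgrp k\<^esub> inv\<^bsub>Bgrp k\<^esub> l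
             | f l. f \<in> carrier (Bgrp k) \<and> l \<in> Gset k}
       \<and> derived (Bgrp k) (carrier (Bgrp k)) =
           {l \<otimes>\<^bsub>Bgrp k\<^esub> f \<otimes>\<^bsub>Bgrp k\<^esub> inv\<^bsub>Bgrp k\<^esub> l \<otimes>\<^bsub>Bgrp k\<^esub> inv\<^bsub>Bgrp k\<^esub> f
             | f l. f \<in> carrier (Bgrp k) \<and> l \<in> Gset k}"
proof -
  interpret G: group "Bgrp k" by (rule grp)
  define D where "D = {x. inB k x \<and> (\<forall>i. \<not> sv x i)}"
  have car: "carrier (Bgrp k) = {x. inB k x}" by (simp add: Bgrp_def)
  have mu: "\<And>x y. x \<otimes>\<^bsub>Bgrp k\<^esub> y = wmult x y" by (simp add: Bgrp_def)
  have iv: "\<And>x. inB k x \<Longrightarrow> inv\<^bsub>Bgrp k\<^esub> x = winv x" by (rule inv_eq)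
  have sub: "subgroup D (Bgrp k)"
    apply (rule subgroup.intro)
    using inB_mult[of k] inB_one[of k] inB_inv[of k] sv_mult[of k] sv_one[of k] sv_inv[of k]
    by (auto simp: D_def car mu iv) (auto simp: Bgrp_def)
  have comm: "\<And>f l. inB k f \<Longrightarrow> inB k l \<Longrightarrow>
      wmult (wmult (wmult f l) (winv f)) (winv l) \<in> D"
    using inB_mult[of k] inB_inv[of k] sv_mult[of k] sv_inv[of k]
    by (simp add: D_def) blast
  have dsD: "derived_set (Bgrp k) (carrier (Bgrp k)) \<subseteq> D"
    using comm by (auto simp: car mu iv)
  have derD: "derived (Bgrp k) (carrier (Bgrp k)) \<subseteq> D"
    unfolding derived_def by (rule G.generate_subgroup_incl[OF dsD sub])
  have dsder: "derived_set (Bgrp k) (carrier (Bgrp k)) \<subseteq> derived (Bgrp k) (carrier (Bgrp k))"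
    unfolding derived_def by (auto intro: generate.incl)
  let ?S1 = "{f \<otimes>\<^bsub>Bgrp k\<^esub> l \<otimes>\<^bsub>Bgrp k\<^esub> inv\<^bsub>Bgrp k\<^esub> f \<otimes>\<^bsub>Bgrp k\<^esub> inv\<^bsub>Bgrp k\<^esub> l
             | f l. f \<in> carrier (Bgrp k) \<and> l \<in> Gset k}"
  let ?S2 = "{l \<otimes>\<^bsub>Bgrp k\<^esub> f \<otimes>\<^bsub>Bgrp k\<^esub> inv\<^bsub>Bgrp k\<^esub> l \<otimes>\<^bsub>Bgrp k\<^esub> inv\<^bsub>Bgrp k\<^esub> f
             | f l. f \<in> carrier (Bgrp k) \<and> l \<in> Gset k}"
  have S1ds: "?S1 \<subseteq> derived_set (Bgrp k) (carrier (Bgrp k))"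
    using Gset_inB[of _ k] by (auto simp: car)
  have S2ds: "?S2 \<subseteq> derived_set (Bgrp k) (carrier (Bgrp k))"
    using Gset_inB[of _ k] by (auto simp: car)
  have DS1: "D \<subseteq> ?S1"
  proof
    fix x assume "x \<in> D"
    then obtain f l where "inB k f" "l \<in> Gset k"
       "x = wmult (wmult (wmult f l) (winv f)) (winv l)"
      using key[OF assms] by (simp add: D_def) blast
    then show "x \<in> ?S1" using Gset_inB[of l k] iv[of f] iv[of l]
      by (simp add: car mu) (rule exI[of _ f], rule exI[of _ l], simp)
  qed
  have DS2: "D \<subseteq> ?S2"
  proof
    fix x assume xD: "x \<in> D"
    then have "winv x \<in> D" using inB_inv[of k] sv_inv[of k] by (auto simp: D_def)
    then obtain f l where f: "inB k f" and l: "l \<in> Gset k" and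
       e: "winv x = wmult (wmult (wmult f l) (winv f)) (winv l)"
      using key[OF assms] by (simp add: D_def) blast
    have lB: "inB k l" using Gset_inB[OF l] .
    have "x = winv (winv x)" using xD inv_inv[of k x] by (simp add: D_def)
    also have "\<dots> = wmult (wmult (wmult l f) (winv l)) (winv f)"
      unfolding e using comm_inv[OF f lB] .
    finally show "x \<in> ?S2" using f l lB iv[of f] iv[of l]
      by (simp add: car mu) (rule exI[of _ f], rule exI[of _ l], simp)
  qed
  show ?thesis using derD DS1 DS2 S1ds S2ds dsder by blast
qed

end
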